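(* Let $C$ be the split octonion algebra over $k$, $G_C=\mathrm{Aut}(C)$, $V_C=1_C^\perp$, and let $G_C\times GL_1$ act on $V_C$ by $(\phi,a)\cdot v=a\,\phi(v)$. Let $V_C^{ss}(k)=\{v\in V_C(k):N_C(v)\neq0\}$. Then $v\mapsto N_C(v)k^{\times2}$ induces a bijection $V_C^{ss}(k)/(G_C\times GL_1)(k)\to k^\times/k^{\times2}$; hence these orbits are in bijection with the isomorphism classes of $2$-dimensional composition algebras over $k$.
   Context: $k$ is a field with $\mathrm{char}(k)\neq2$. An octonion algebra is an 8-dimensional unital $k$-algebra with non-degenerate multiplicative quadratic norm $N_C$; it is split if $N_C$ is isotropic (unique up to isomorphism). $1_C^\perp$ is the orthogonal complement of the identity with respect to the bilinear form of $N_C$. *)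

theory Defs
  imports Main
begin

datatype 'k mat2 = M2 'k 'k 'k 'k  (* M2 a b c d = matrix [[a,b],[c,d]] *)

fun m2_add :: "'k::field mat2 \<Rightarrow> 'k mat2 \<Rightarrow> 'k mat2" where
  "m2_add (M2 a b c d) (M2 a' b' c' d') = M2 (a+a') (b+b') (c+c') (d+d')"

fun m2_smult :: "'k::field \<Rightarrow> 'k mat2 \<Rightarrow> 'k mat2" where
  "m2_smult s (M2 a b c d) = M2 (s*a) (s*b) (s*c) (s*d)"

fun m2_mult :: "'k::field mat2 \<Rightarrow> 'k mat2 \<Rightarrow> 'k mat2" where
  "m2_mult (M2 a b c d) (M2 a' b' c' d') =
     M2 (a*a' + b*c') (a*b' + b*d') (c*a' + d*c') (c*b' + d*d')"

definition m2_one :: "'k::field mat2" where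
  "m2_one = M2 1 0 0 1"

definition m2_zero :: "'k::field mat2" where
  "m2_zero = M2 0 0 0 0"

fun m2_conj :: "'k::field mat2 \<Rightarrow> 'k mat2" where
  "m2_conj (M2 a b c d) = M2 d (-b) (-c) a"

fun m2_det :: "'k::field mat2 \<Rightarrow> 'k" where
  "m2_det (M2 a b c d) = a*d - b*c"

text \<open>Following Springer--Veldkamp: C = M_2(k) x M_2(k) with
  (a,b)(c,d) = (ac + conj(d) b, d a + b conj(c)) and N(a,b) = det a - det b.
  Its norm is isotropic, so this is (a model of) the split octonion algebra,
  which is unique up to isomorphism.\<close>

type_synonym 'k oct = "'k mat2 \<times> 'k mat2"

definition oct_add :: "'k::field oct \<Rightarrow> 'k oct \<Rightarrow> 'k oct" where
  "oct_add x y = (m2_add (fst x) (fst y), m2_add (snd x) (snd y))"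

definition oct_smult :: "'k::field \<Rightarrow> 'k oct \<Rightarrow> 'k oct" where
  "oct_smult s x = (m2_smult s (fst x), m2_smult s (snd x))"

definition oct_mult :: "'k::field oct \<Rightarrow> 'k oct \<Rightarrow> 'k oct" where
  "oct_mult x y =
     (m2_add (m2_mult (fst x) (fst y)) (m2_mult (m2_conj (snd y)) (snd x)),
      m2_add (m2_mult (snd y) (fst x)) (m2_mult (snd x) (m2_conj (fst y))))"

definition oct_one :: "'k::field oct" where
  "oct_one = (m2_one, m2_zero)"

definition oct_norm :: "'k::field oct \<Rightarrow> 'k" where
  "oct_norm x = m2_det (fst x) - m2_det (snd x)"

text \<open>Polar bilinear form of the norm (only orthogonality is used, so the
  normalisation factor is irrelevant).\<close>
definition oct_bil :: "'k::field oct \<Rightarrow> 'k oct \<Rightarrow> 'k" where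
  "oct_bil x y = oct_norm (oct_add x y) - oct_norm x - oct_norm y"

definition oct_aut :: "('k::field oct \<Rightarrow> 'k oct) set" where
  "oct_aut = {\<phi>. bij \<phi>
     \<and> (\<forall>x y. \<phi> (oct_add x y) = oct_add (\<phi> x) (\<phi> y))
     \<and> (\<forall>s x. \<phi> (oct_smult s x) = oct_smult s (\<phi> x))
     \<and> (\<forall>x y. \<phi> (oct_mult x y) = oct_mult (\<phi> x) (\<phi> y))
     \<and> \<phi> oct_one = oct_one}"

definition oct_V :: "'k::field oct set" where
  "oct_V = {v. oct_bil oct_one v = 0}"

definition oct_Vss :: "'k::field oct set" where
  "oct_Vss = {v \<in> oct_V. oct_norm v \<noteq> 0}"

definition oct_orbit_rel :: "('k::field oct \<times> 'k oct) set" where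
  "oct_orbit_rel = {(v, w). v \<in> oct_Vss \<and> w \<in> oct_Vss \<and>
     (\<exists>\<phi> \<in> oct_aut. \<exists>a::'k. a \<noteq> 0 \<and> w = oct_smult a (\<phi> v))}"

definition sq_class_eq :: "'k::field \<Rightarrow> 'k \<Rightarrow> bool" where
  "sq_class_eq s t \<longleftrightarrow> (\<exists>c. c \<noteq> 0 \<and> t = c^2 * s)"

text \<open>Every 2-dimensional k-algebra is isomorphic to one with underlying space
  k x k, so isomorphism classes of 2-dimensional composition algebras are
  represented by pairs (multiplication, norm) on k x k.\<close>

definition v2_add :: "'k::field \<times> 'k \<Rightarrow> 'k \<times> 'k \<Rightarrow> 'k \<times> 'k" where
  "v2_add x y = (fst x + fst y, snd x + snd y)"

definition v2_smult :: "'k::field \<Rightarrow> 'k \<times> 'k \<Rightarrow> 'k \<times> 'k" where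
  "v2_smult s x = (s * fst x, s * snd x)"

definition v2_linear :: "('k::field \<times> 'k \<Rightarrow> 'k \<times> 'k) \<Rightarrow> bool" where
  "v2_linear f \<longleftrightarrow> (\<forall>x y. f (v2_add x y) = v2_add (f x) (f y))
                   \<and> (\<forall>s x. f (v2_smult s x) = v2_smult s (f x))"

definition comp_alg2 ::
  "(('k::field \<times> 'k \<Rightarrow> 'k \<times> 'k \<Rightarrow> 'k \<times> 'k) \<times> ('k \<times> 'k \<Rightarrow> 'k)) set" where
  "comp_alg2 = {(m, N).
     \<comment> \<open>m is k-bilinear\<close>
     (\<forall>x y z. m (v2_add x y) z = v2_add (m x z) (m y z))
     \<and> (\<forall>x y z. m x (v2_add y z) = v2_add (m x y) (m x z))
     \<and> (\<forall>s x y. m (v2_smult s x) y = v2_smult s (m x y))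
     \<and> (\<forall>s x y. m x (v2_smult s y) = v2_smult s (m x y))
     \<comment> \<open>m has an identity element\<close>
     \<and> (\<exists>e. \<forall>x. m e x = x \<and> m x e = x)
     \<comment> \<open>N is a quadratic form with bilinear polar form\<close>
     \<and> (\<forall>s x. N (v2_smult s x) = s^2 * N x)
     \<and> (\<forall>x y z. N (v2_add (v2_add x y) z) - N (v2_add x y) - N z
                = (N (v2_add x z) - N x - N z) + (N (v2_add y z) - N y - N z))
     \<comment> \<open>N is non-degenerate\<close>
     \<and> (\<forall>x. (\<forall>y. N (v2_add x y) - N x - N y = 0) \<longrightarrow> x = (0, 0))
     \<comment> \<open>N is multiplicative\<close>
     \<and> (\<forall>x y. N (m x y) = N x * N y)}"

definition comp_alg2_iso ::
  "((('k::field \<times> 'k \<Rightarrow> 'k \<times> 'k \<Rightarrow> 'k \<times> 'k) \<times> ('k \<times> 'k \<Rightarrow> 'k)) \<times>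
    (('k \<times> 'k \<Rightarrow> 'k \<times> 'k \<Rightarrow> 'k \<times> 'k) \<times> ('k \<times> 'k \<Rightarrow> 'k))) set" where
  "comp_alg2_iso = {((m, N), (m', N')). (m, N) \<in> comp_alg2 \<and> (m', N') \<in> comp_alg2 \<and>
     (\<exists>f. bij f \<and> v2_linear f \<and> (\<forall>x y. f (m x y) = m' (f x) (f y))
          \<and> (\<forall>x. N' (f x) = N x))}"

end

theory Submission
  imports Defs
begin

lemma m2_cases4: obtains a1 a2 a3 a4 where "A = M2 a1 a2 a3 a4" by (cases A) auto

lemma m2_mult_assoc: "m2_mult (m2_mult A B) C = m2_mult A (m2_mult B C)"
  by (cases A; cases B; cases C) (simp add: algebra_simps)
lemma m2_add_mult: "m2_mult (m2_add A B) C = m2_add (m2_mult A C) (m2_mult B C)"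
  by (cases A; cases B; cases C) (simp add: algebra_simps)
lemma m2_mult_add: "m2_mult C (m2_add A B) = m2_add (m2_mult C A) (m2_mult C B)"
  by (cases A; cases B; cases C) (simp add: algebra_simps)
lemma m2_smult_mult: "m2_mult (m2_smult s A) B = m2_smult s (m2_mult A B)"
  by (cases A; cases B) (simp add: algebra_simps)
lemma m2_mult_smult: "m2_mult A (m2_smult s B) = m2_smult s (m2_mult A B)"
  by (cases A; cases B) (simp add: algebra_simps)
lemma m2_smult_smult: "m2_smult s (m2_smult t A) = m2_smult (s*t) A"
  by (cases A) (simp add: algebra_simps)
lemma m2_smult_add: "m2_smult s (m2_add A B) = m2_add (m2_smult s A) (m2_smult s B)"
  by (cases A; cases B) (simp add: algebra_simps)
lemma m2_conj_mult: "m2_conj (m2_mult A B) = m2_mult (m2_conj B) (m2_conj A)"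
  by (cases A; cases B) (simp add: algebra_simps)
lemma m2_conj_smult: "m2_conj (m2_smult s A) = m2_smult s (m2_conj A)"
  by (cases A) (simp add: algebra_simps)
lemma m2_conj_add: "m2_conj (m2_add A B) = m2_add (m2_conj A) (m2_conj B)"
  by (cases A; cases B) (simp add: algebra_simps)
lemma m2_conj_conj: "m2_conj (m2_conj A) = A"
  by (cases A) simp
lemma m2_conj_left: "m2_mult (m2_conj A) (m2_mult A B) = m2_smult (m2_det A) B"
  by (cases A; cases B) (simp add: algebra_simps)
lemma m2_conj_right: "m2_mult A (m2_mult (m2_conj A) B) = m2_smult (m2_det A) B"
  by (cases A; cases B) (simp add: algebra_simps)
lemma m2_conj_left0: "m2_mult (m2_conj A) A = m2_smult (m2_det A) m2_one"
  by (cases A) (simp add: algebra_simps m2_one_def)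
lemma m2_conj_right0: "m2_mult A (m2_conj A) = m2_smult (m2_det A) m2_one"
  by (cases A) (simp add: algebra_simps m2_one_def)
lemma m2_smult_one: "m2_smult 1 A = A" by (cases A) simp
lemma m2_one_mult: "m2_mult m2_one A = A" by (cases A) (simp add: m2_one_def)
lemma m2_mult_one: "m2_mult A m2_one = A" by (cases A) (simp add: m2_one_def)

lemmas m2_simps = m2_mult_assoc m2_add_mult m2_mult_add m2_smult_mult m2_mult_smult
  m2_smult_smult m2_smult_add m2_conj_mult m2_conj_smult m2_conj_add m2_conj_conj
  m2_conj_left m2_conj_right

definition hmap :: "'k::field mat2 \<Rightarrow> 'k mat2 \<Rightarrow> 'k oct \<Rightarrow> 'k oct" where
  "hmap p q x = (m2_smult (1 / m2_det p) (m2_mult p (m2_mult (fst x) (m2_conj p))),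
                 m2_smult (1 / m2_det p) (m2_mult q (m2_mult (snd x) (m2_conj p))))"

lemma hmap_mult:
  fixes p q :: "'k::field mat2"
  assumes "m2_det q = m2_det p" "m2_det p \<noteq> 0"
  shows "hmap p q (oct_mult x y) = oct_mult (hmap p q x) (hmap p q y)"
  using assms unfolding hmap_def oct_mult_def
  by (simp add: m2_simps power2_eq_square)

lemma oct_cases8: obtains a1 a2 a3 a4 b1 b2 b3 b4 where "x = (M2 a1 a2 a3 a4, M2 b1 b2 b3 b4)"
  by (metis mat2.exhaust prod.collapse)

definition otr :: "'k::field oct \<Rightarrow> 'k" where
  "otr x = (case fst x of M2 a b c d \<Rightarrow> a + d)"

lemma otr_simp[simp]: "otr (M2 a1 a2 a3 a4, B) = a1 + a4" by (simp add: otr_def)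

lemma oct_V_iff: "x \<in> oct_V \<longleftrightarrow> otr x = 0"
  by (cases x rule: oct_cases8)
     (simp add: oct_V_def oct_bil_def oct_norm_def oct_add_def oct_one_def m2_one_def m2_zero_def algebra_simps)

lemma oct_sq: "oct_mult x x = oct_add (oct_smult (otr x) x) (oct_smult (- oct_norm x) oct_one)"
  by (cases x rule: oct_cases8)
     (simp add: oct_mult_def oct_add_def oct_smult_def oct_norm_def oct_one_def m2_one_def m2_zero_def algebra_simps)

lemma oct_norm_smult: "oct_norm (oct_smult s x) = s^2 * oct_norm x"
  by (cases x rule: oct_cases8) (simp add: oct_norm_def oct_smult_def algebra_simps power2_eq_square)

lemma otr_smult: "otr (oct_smult s x) = s * otr x"
  by (cases x rule: oct_cases8) (simp add: oct_smult_def algebra_simps)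

lemma oct_smult_smult: "oct_smult s (oct_smult t x) = oct_smult (s*t) x"
  by (cases x rule: oct_cases8) (simp add: oct_smult_def algebra_simps)

lemma oct_smult_1: "oct_smult 1 x = x"
  by (cases x rule: oct_cases8) (simp add: oct_smult_def)

lemma aut_add: "\<phi> \<in> oct_aut \<Longrightarrow> \<phi> (oct_add x y) = oct_add (\<phi> x) (\<phi> y)"
  unfolding oct_aut_def by blast
lemma aut_smult: "\<phi> \<in> oct_aut \<Longrightarrow> \<phi> (oct_smult s x) = oct_smult s (\<phi> x)"
  unfolding oct_aut_def by blast
lemma aut_mult: "\<phi> \<in> oct_aut \<Longrightarrow> \<phi> (oct_mult x y) = oct_mult (\<phi> x) (\<phi> y)"
  unfolding oct_aut_def by blast
lemma aut_one: "\<phi> \<in> oct_aut \<Longrightarrow> \<phi> oct_one = oct_one"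
  unfolding oct_aut_def by blast
lemma aut_bij: "\<phi> \<in> oct_aut \<Longrightarrow> bij \<phi>"
  unfolding oct_aut_def by blast

lemma aut_scalar:
  assumes "\<phi> \<in> oct_aut" shows "\<phi> (oct_smult s oct_one) = oct_smult s oct_one"
  using assms by (simp add: aut_smult aut_one)

lemma aut_inj: "\<phi> \<in> oct_aut \<Longrightarrow> inj \<phi>"
  unfolding oct_aut_def by (auto simp: bij_def)

lemma aut_preserve:
  fixes v :: "'k::field oct"
  assumes phi: "\<phi> \<in> oct_aut" and v: "v \<in> oct_V" and nv: "oct_norm v \<noteq> 0" and two: "(2::'k) \<noteq> 0"
  shows "\<phi> v \<in> oct_V \<and> oct_norm (\<phi> v) = oct_norm v"
proof -
  have tv: "otr v = 0" using v oct_V_iff by blast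
  have vsq: "oct_mult v v = oct_smult (- oct_norm v) oct_one"
    using tv oct_sq[of v]
    by (cases v rule: oct_cases8) (simp add: oct_add_def oct_smult_def oct_one_def m2_one_def m2_zero_def)
  define y where "y = \<phi> v"
  have ysq: "oct_mult y y = oct_smult (- oct_norm v) oct_one"
    using phi vsq unfolding y_def by (metis aut_mult aut_scalar)
  have eq: "oct_add (oct_smult (otr y) y) (oct_smult (- oct_norm y) oct_one) = oct_smult (- oct_norm v) oct_one"
    using ysq oct_sq[of y] by simp
  show ?thesis
  proof (cases "otr y = 0")
    case True
    then have "oct_norm y = oct_norm v" using eq
      by (cases y rule: oct_cases8) (simp add: oct_add_def oct_smult_def oct_one_def m2_one_def m2_zero_def)
    then show ?thesis using True oct_V_iff[of "\<phi> v"] y_def by simp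
  next
    case False
    define t where "t = otr y"
    define s where "s = (oct_norm y - oct_norm v) / t"
    have "y = oct_smult s oct_one"
    proof (cases y rule: oct_cases8)
      case (1 a1 a2 a3 a4 b1 b2 b3 b4)
      have E: "t*a1 - oct_norm y = - oct_norm v" "t*a2 = 0" "t*a3 = 0" "t*a4 - oct_norm y = - oct_norm v"
        "t*b1 = 0" "t*b2 = 0" "t*b3 = 0" "t*b4 = 0"
        using eq unfolding 1 t_def
        by (simp_all add: oct_add_def oct_smult_def oct_one_def m2_one_def m2_zero_def)
      have tn: "t \<noteq> 0" using False t_def by simp
      have "a1 = s" "a4 = s" using E tn unfolding s_def by (auto simp: field_simps)
      moreover have "a2 = 0" "a3 = 0" "b1 = 0" "b2 = 0" "b3 = 0" "b4 = 0" using E tn by auto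
      ultimately show ?thesis unfolding 1 by (simp add: oct_smult_def oct_one_def m2_one_def m2_zero_def)
    qed
    then have "\<phi> v = \<phi> (oct_smult s oct_one)" using aut_scalar[OF phi] y_def by simp
    then have vs: "v = oct_smult s oct_one" using aut_inj[OF phi] by (auto dest: injD)
    then have "otr v = 2 * s" by (simp add: oct_smult_def oct_one_def m2_one_def)
    then have "s = 0" using tv two by simp
    then have "oct_norm v = 0" using vs by (simp add: oct_norm_smult)
    then show ?thesis using nv by simp
  qed
qed

lemma aut_id: "id \<in> oct_aut" by (simp add: oct_aut_def)

lemma aut_comp: "\<phi> \<in> oct_aut \<Longrightarrow> \<psi> \<in> oct_aut \<Longrightarrow> \<psi> \<circ> \<phi> \<in> oct_aut"
  unfolding oct_aut_def by (auto intro: bij_comp simp del: split_paired_All)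

lemma aut_inv:
  assumes phi: "\<phi> \<in> oct_aut" shows "inv \<phi> \<in> oct_aut"
proof -
  have b: "bij \<phi>" using aut_bij[OF phi] .
  have fi: "\<phi> (inv \<phi> x) = x" for x using b by (simp add: bij_is_surj surj_f_inv_f)
  have i: "inj \<phi>" using b bij_is_inj by auto
  have "inv \<phi> (oct_add x y) = oct_add (inv \<phi> x) (inv \<phi> y)" for x y
    by (rule injD[OF i]) (simp add: fi aut_add[OF phi])
  moreover have "inv \<phi> (oct_smult s x) = oct_smult s (inv \<phi> x)" for s x
    by (rule injD[OF i]) (simp add: fi aut_smult[OF phi])
  moreover have "inv \<phi> (oct_mult x y) = oct_mult (inv \<phi> x) (inv \<phi> y)" for x y
    by (rule injD[OF i]) (simp add: fi aut_mult[OF phi])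
  moreover have "inv \<phi> oct_one = oct_one"
    by (rule injD[OF i]) (simp add: fi aut_one[OF phi])
  ultimately show ?thesis using b bij_imp_bij_inv unfolding oct_aut_def by blast
qed

lemma hmap_add: "hmap p q (oct_add x y) = oct_add (hmap p q x) (hmap p q y)"
  unfolding hmap_def oct_add_def by (simp add: m2_simps)
lemma hmap_smult: "hmap p q (oct_smult s x) = oct_smult s (hmap p q x)"
  unfolding hmap_def oct_smult_def by (simp add: m2_simps mult.commute)

lemma m2_zero_mult: "m2_mult m2_zero A = m2_zero" "m2_mult A m2_zero = m2_zero" "m2_smult s m2_zero = m2_zero"
  by (cases A; simp add: m2_zero_def)+

lemma hmap_one: assumes "m2_det p \<noteq> 0" shows "hmap p q oct_one = oct_one"
  using assms unfolding hmap_def oct_one_def by (simp add: m2_one_mult m2_conj_right0 m2_smult_smult m2_zero_mult m2_smult_one)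

lemma m2_det_conj: "m2_det (m2_conj p) = m2_det p" by (cases p) (simp add: algebra_simps)

lemma hmap_inv: assumes "m2_det p \<noteq> 0" "m2_det q = m2_det p"
  shows "hmap (m2_conj p) (m2_conj q) (hmap p q x) = x"
  using assms unfolding hmap_def
  by (simp add: m2_simps m2_det_conj m2_smult_one m2_conj_left0 m2_mult_one)

lemma hmap_aut:
  assumes "m2_det p \<noteq> 0" "m2_det q = m2_det p"
  shows "hmap p q \<in> oct_aut"
proof -
  have 1: "hmap (m2_conj p) (m2_conj q) \<circ> hmap p q = id" using hmap_inv[OF assms] by auto
  have 2: "hmap p q \<circ> hmap (m2_conj p) (m2_conj q) = id"
    using hmap_inv[of "m2_conj p" "m2_conj q"] assms by (auto simp: m2_det_conj m2_conj_conj)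
  have "bij (hmap p q)" using 1 2 o_bij by blast
  then show ?thesis unfolding oct_aut_def
    using hmap_add hmap_smult hmap_mult[OF assms(2,1)] hmap_one[OF assms(1)] by blast
qed

definition sigp :: "'k::field \<Rightarrow> 'k \<Rightarrow> 'k \<Rightarrow> 'k oct \<Rightarrow> 'k oct" where
  "sigp g gi h x = (case x of (M2 a1 a2 a3 a4, M2 b1 b2 b3 b4) \<Rightarrow>
     (M2 (h*(a1+a4+b1+b4)) (h*(a2-b2) + h*gi*(a3-b3)) (h*(g*(a2+b2)+a3+b3)) (h*(a1+a4-b1-b4)),
      M2 (h*(a1-a4-b1+b4)) (h*gi*(a3+b3) - h*(a2+b2)) (h*(g*(b2-a2)-b3+a3)) (h*(a1-a4+b1-b4))))"

lemma sigp_mult: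
  fixes g :: "'k::field"
  assumes "g * gi = 1" "2 * h = 1"
  shows "sigp g gi h (oct_mult x y) = oct_mult (sigp g gi h x) (sigp g gi h y)"
proof -
  obtain a1 a2 a3 a4 b1 b2 b3 b4 where X: "x = (M2 a1 a2 a3 a4, M2 b1 b2 b3 b4)"
    by (metis mat2.exhaust prod.collapse)
  obtain c1 c2 c3 c4 d1 d2 d3 d4 where Y: "y = (M2 c1 c2 c3 c4, M2 d1 d2 d3 d4)"
    by (metis mat2.exhaust prod.collapse)
  show ?thesis using assms unfolding X Y sigp_def oct_mult_def
    apply simp
    apply (intro conjI)
    apply algebra+
    done
qed

lemma sigp_add: "sigp g gi h (oct_add x y) = oct_add (sigp g gi h x) (sigp g gi h y)"
    by (cases x rule: oct_cases8; cases y rule: oct_cases8)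
       (simp add: sigp_def oct_add_def algebra_simps)
lemma sigp_smult: "sigp g gi h (oct_smult s x) = oct_smult s (sigp g gi h x)"
    by (cases x rule: oct_cases8)
       (simp add: sigp_def oct_smult_def algebra_simps)

lemma sigp_inv:
  fixes g :: "'k::field"
  assumes "g * gi = 1" "2 * h = 1"
  shows "sigp g gi h (sigp g gi h x) = x"
proof -
  obtain a1 a2 a3 a4 b1 b2 b3 b4 where X: "x = (M2 a1 a2 a3 a4, M2 b1 b2 b3 b4)"
    by (metis mat2.exhaust prod.collapse)
  show ?thesis using assms unfolding X sigp_def
    apply simp
    apply (intro conjI)
    apply algebra+
    done
qed

definition sig :: "'k::field \<Rightarrow> 'k oct \<Rightarrow> 'k oct" where
  "sig g = sigp g (inverse g) (inverse 2)"

lemma sig_eq: "sig g (M2 a1 a2 a3 a4, M2 b1 b2 b3 b4) =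
     (M2 ((a1+a4+b1+b4)/2) ((a2-b2)/2 + (a3-b3)/(2*g)) ((g*(a2+b2)+a3+b3)/2) ((a1+a4-b1-b4)/2),
      M2 ((a1-a4-b1+b4)/2) ((a3+b3)/(2*g) - (a2+b2)/2) ((g*(b2-a2)-b3+a3)/2) ((a1-a4+b1-b4)/2))"
  by (simp add: sig_def sigp_def field_simps)

lemma sig_aut:
  fixes g :: "'k::field"
  assumes g: "g \<noteq> 0" and two: "(2::'k) \<noteq> 0"
  shows "sig g \<in> oct_aut"
proof -
  have gi: "g * inverse g = 1" "2 * inverse (2::'k) = 1" using g two by auto
  have add: "sig g (oct_add x y) = oct_add (sig g x) (sig g y)" for x y
    unfolding sig_def by (rule sigp_add)
  have sm: "sig g (oct_smult s x) = oct_smult s (sig g x)" for s x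
    unfolding sig_def by (rule sigp_smult)
  have mu: "sig g (oct_mult x y) = oct_mult (sig g x) (sig g y)" for x y
    unfolding sig_def by (rule sigp_mult[OF gi])
  have one: "sig g oct_one = oct_one"
    using gi by (simp add: sig_def sigp_def oct_one_def m2_one_def m2_zero_def)
  have inv: "sig g (sig g x) = x" for x
    unfolding sig_def by (rule sigp_inv[OF gi])
  have "bij (sig g)" using inv by (metis o_bij comp_apply eq_id_iff)
  then show ?thesis unfolding oct_aut_def using add sm mu one by blast
qed

fun m2tr :: "'k::field mat2 \<Rightarrow> 'k" where "m2tr (M2 a b c d) = a + d"

lemma otr_m2tr: "otr (A, B) = m2tr A" by (cases A) simp

lemma m2_det_mult: "m2_det (m2_mult A B) = m2_det A * m2_det B"
  by (cases A; cases B) (simp add: algebra_simps)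
lemma m2_det_smult: "m2_det (m2_smult s A) = s^2 * m2_det A"
  by (cases A) (simp add: algebra_simps power2_eq_square)
lemma m2_smult_cancel: "s \<noteq> 0 \<Longrightarrow> m2_smult s A = m2_smult s B \<Longrightarrow> A = B"
  by (cases A; cases B) simp
lemma m2_det_one: "m2_det m2_one = 1" by (simp add: m2_one_def)
lemma m2_conj_one: "m2_conj m2_one = m2_one" by (simp add: m2_one_def)
lemma m2_det_zero: "m2_det m2_zero = 0" by (simp add: m2_zero_def)

lemma companion:
  fixes a :: "'k::field mat2"
  assumes tz: "m2tr a = 0" and nz: "a \<noteq> m2_zero" and two: "(2::'k) \<noteq> 0"
  shows "\<exists>p. m2_det p \<noteq> 0 \<and> m2_mult p a = m2_mult (M2 0 1 (- m2_det a) 0) p"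
proof -
  obtain a1 a2 a3 a4 where A: "a = M2 a1 a2 a3 a4" by (cases a)
  have "a1 + a4 = 0" using tz A by simp
  then have a4: "a4 = -a1" by (simp add: add_eq_0_iff)
  show ?thesis
  proof (cases "a2 \<noteq> 0")
    case True
    show ?thesis by (rule exI[of _ "M2 1 0 a1 a2"]) (use True in \<open>simp add: A a4 algebra_simps\<close>)
  next
    case F2: False
    show ?thesis
    proof (cases "a3 \<noteq> 0")
      case True
      show ?thesis by (rule exI[of _ "M2 0 1 a3 (-a1)"]) (use True in \<open>simp add: A a4 algebra_simps\<close>)
    next
      case False
      then have "a1 \<noteq> 0" using nz F2 A a4 by (auto simp: m2_zero_def)
      then have "-2*a1 \<noteq> 0" using two by simp
      then show ?thesis using F2 False
        by (intro exI[of _ "M2 1 1 a1 (-a1)"]) (simp add: A a4 algebra_simps)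
    qed
  qed
qed

lemma conj_exists:
  fixes a a' :: "'k::field mat2"
  assumes "m2tr a = 0" "a \<noteq> m2_zero" "m2tr a' = 0" "a' \<noteq> m2_zero" "m2_det a = m2_det a'"
    and two: "(2::'k) \<noteq> 0"
  shows "\<exists>P. m2_det P \<noteq> 0 \<and> m2_mult P a = m2_mult a' P"
proof -
  define K where "K = M2 0 1 (- m2_det a) (0::'k)"
  obtain p where p: "m2_det p \<noteq> 0" "m2_mult p a = m2_mult K p"
    using companion[OF assms(1,2) two] K_def by blast
  obtain p' where p': "m2_det p' \<noteq> 0" "m2_mult p' a' = m2_mult K p'"
    using companion[OF assms(3,4) two] K_def assms(5) by auto
  have "m2_mult (m2_conj p') (m2_mult (m2_mult p' a') (m2_conj p')) =
        m2_mult (m2_conj p') (m2_mult (m2_mult K p') (m2_conj p'))" using p' by simp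
  then have "m2_smult (m2_det p') (m2_mult a' (m2_conj p')) = m2_smult (m2_det p') (m2_mult (m2_conj p') K)"
    by (simp add: m2_simps m2_conj_right0 m2_mult_one)
  then have e: "m2_mult a' (m2_conj p') = m2_mult (m2_conj p') K" using m2_smult_cancel p'(1) by blast
  define P where "P = m2_mult (m2_conj p') p"
  have "m2_mult P a = m2_mult (m2_conj p') (m2_mult K p)" by (simp add: P_def m2_mult_assoc p(2))
  also have "\<dots> = m2_mult (m2_mult (m2_conj p') K) p" by (simp add: m2_mult_assoc)
  also have "\<dots> = m2_mult a' P" by (simp add: P_def e[symmetric] m2_mult_assoc)
  finally have "m2_mult P a = m2_mult a' P" .
  moreover have "m2_det P \<noteq> 0" using p p' by (simp add: P_def m2_det_mult m2_det_conj)
  ultimately show ?thesis by blast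
qed

lemma hmove:
  fixes a b a' b' :: "'k::field mat2"
  assumes two: "(2::'k) \<noteq> 0" and ta: "m2tr a = 0" and ta': "m2tr a' = 0"
    and A: "(a = m2_zero \<and> a' = m2_zero) \<or> (a \<noteq> m2_zero \<and> a' \<noteq> m2_zero \<and> m2_det a = m2_det a')"
    and B: "(b = m2_zero \<and> b' = m2_zero) \<or> (m2_det b \<noteq> 0 \<and> m2_det b = m2_det b')"
  shows "\<exists>\<phi>\<in>oct_aut. \<phi> (a, b) = (a', b')"
proof -
  obtain P where P: "m2_det P \<noteq> 0" "m2_mult P a = m2_mult a' P"
  proof (cases "a = m2_zero")
    case True
    then have "a' = m2_zero" using A by auto
    then show ?thesis using that[of m2_one] True by (simp add: m2_det_one m2_zero_mult)
  next
    case False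
    then show ?thesis using that conj_exists[OF ta _ ta' _ _ two] A by auto
  qed
  define d where "d = m2_det P"
  define q where "q = (if b = m2_zero then P else m2_smult (1 / m2_det b) (m2_mult b' (m2_mult P (m2_conj b))))"
  have dq: "m2_det q = m2_det P"
  proof (cases "b = m2_zero")
    case False
    then have "m2_det b \<noteq> 0" "m2_det b' = m2_det b" using B by auto
    then show ?thesis using False unfolding q_def
      by (simp add: m2_det_smult m2_det_mult m2_det_conj field_simps power2_eq_square)
  qed (simp add: q_def)
  have 1: "m2_smult (1 / d) (m2_mult P (m2_mult a (m2_conj P))) = a'"
  proof -
    have "m2_mult P (m2_mult a (m2_conj P)) = m2_mult a' (m2_mult P (m2_conj P))"
      by (simp add: P(2) flip: m2_mult_assoc)
    also have "\<dots> = m2_smult d a'" by (simp add: m2_conj_right0 m2_mult_smult m2_mult_one d_def)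
    finally show ?thesis using P(1) by (simp add: m2_smult_smult d_def m2_smult_one)
  qed
  have 2: "m2_smult (1 / d) (m2_mult q (m2_mult b (m2_conj P))) = b'"
  proof (cases "b = m2_zero")
    case True
    then show ?thesis using B by (simp add: q_def m2_zero_mult m2_det_zero)
  next
    case False
    then have db: "m2_det b \<noteq> 0" using B by auto
    have "m2_mult q (m2_mult b (m2_conj P)) = m2_smult (1 / m2_det b) (m2_smult (m2_det b) (m2_smult d b'))"
      using False by (simp add: q_def m2_simps m2_conj_left0 m2_conj_right0 m2_mult_one d_def)
    then show ?thesis using db P(1) by (simp add: m2_smult_smult d_def m2_smult_one)
  qed
  have "hmap P q (a, b) = (a', b')" using 1 2 by (simp add: hmap_def d_def)
  moreover have "hmap P q \<in> oct_aut" using hmap_aut[OF P(1) dq] .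
  ultimately show ?thesis by blast
qed

lemma four_nz: "(2::'k::field) \<noteq> 0 \<Longrightarrow> (4::'k) \<noteq> 0"
  by (metis mult_2 mult_eq_0_iff numeral_Bit0 numeral_times_numeral)

lemma sig_W:
  fixes g :: "'k::field"
  assumes "g \<noteq> 0" "(2::'k) \<noteq> 0"
  shows "sig g (M2 s t (-g*t) (-s), M2 s' t' (-g*t') (-s')) =
         (m2_zero, M2 (s - s') (-(t+t')) (g*(t'-t)) (s+s'))"
  using assms four_nz[OF assms(2)] by (simp add: sig_eq m2_zero_def field_simps)

lemma choose:
  fixes A B n :: "'k::field"
  assumes two: "(2::'k) \<noteq> 0" and n: "n = A - B" "n \<noteq> 0" and za: "za \<Longrightarrow> A = 0" and zb: "zb \<longleftrightarrow> B = 0"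
  shows "\<exists>g s t s' t'. g \<noteq> 0 \<and> (za \<longrightarrow> s = 0 \<and> t = 0) \<and> (\<not> za \<longrightarrow> (s \<noteq> 0 \<or> t \<noteq> 0))
      \<and> A = - (s^2) + g*t^2 \<and> (zb \<longrightarrow> s' = 0 \<and> t' = 0) \<and> B = - (s'^2) + g*t'^2"
proof (cases zb)
  case True
  then have "B = 0" using zb by simp
  then have "A = n" "\<not> za" using n za by auto
  then show ?thesis using True n \<open>B = 0\<close>
    by (intro exI[of _ n] exI[of _ 0] exI[of _ 1] exI[of _ 0] exI[of _ 0]) simp
next
  case nzb: False
  then have B: "B \<noteq> 0" using zb by simp
  show ?thesis
  proof (cases za)
    case True
    then show ?thesis using nzb B za[OF True]
      by (intro exI[of _ B] exI[of _ 0] exI[of _ 0] exI[of _ 0] exI[of _ 1]) simp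
  next
    case nza: False
    define b where "b = (1 - n) / 2"
    define b' where "b' = (-1 - n) / 2"
    define g where "g = A + b^2"
    have e1: "b - b' = 1" "b + b' = -n" unfolding b_def b'_def using two
      by (simp_all add: field_simps)
    have "b^2 - b'^2 = (b - b') * (b + b')" by (simp add: algebra_simps power2_eq_square)
    then have bb: "b^2 - b'^2 = -n" using e1 by simp
    show ?thesis
    proof (cases "g = 0")
      case False
      have "B = - (b'^2) + g*1^2" using bb n unfolding g_def by (simp add: algebra_simps)
      moreover have "A = - (b^2) + g*1^2" unfolding g_def by simp
      ultimately show ?thesis using False nza nzb
        by (intro exI[of _ g] exI[of _ b] exI[of _ 1] exI[of _ b'] exI[of _ 1]) simp
    next
      case g0: True
      show ?thesis
      proof (cases "b = 0")
        case False
        have "A = - (b^2) + B*0^2" using g0 unfolding g_def by (simp add: algebra_simps eq_neg_iff_add_eq_0)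
        then show ?thesis using False nza nzb B
          by (intro exI[of _ B] exI[of _ b] exI[of _ 0] exI[of _ 0] exI[of _ 1]) simp
      next
        case True
        then have A0: "A = 0" using g0 g_def by simp
        have "n = 1" using True two unfolding b_def by (simp add: field_simps)
        then have "B = -1" using n A0 by (metis add.inverse_inverse diff_0)
        then show ?thesis using A0 nza nzb
          by (intro exI[of _ 1] exI[of _ 1] exI[of _ 1] exI[of _ 1] exI[of _ 0]) simp
      qed
    qed
  qed
qed

lemma good:
  fixes a b :: "'k::field mat2"
  assumes two: "(2::'k) \<noteq> 0" and ta: "m2tr a = 0" and n: "m2_det a - m2_det b = n" "n \<noteq> 0"
    and bz: "b = m2_zero \<or> m2_det b \<noteq> 0"
  shows "\<exists>\<phi>\<in>oct_aut. \<phi> (a, b) = (m2_zero, M2 0 1 n 0)"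
proof -
  have zb: "b = m2_zero \<longleftrightarrow> m2_det b = 0" using bz by (auto simp: m2_det_zero)
  have za: "a = m2_zero \<Longrightarrow> m2_det a = 0" by (simp add: m2_det_zero)
  obtain g s t s' t' where G: "g \<noteq> 0" "a = m2_zero \<longrightarrow> s = 0 \<and> t = 0" "a \<noteq> m2_zero \<longrightarrow> (s \<noteq> 0 \<or> t \<noteq> 0)"
      "m2_det a = - (s^2) + g*t^2" "b = m2_zero \<longrightarrow> s' = 0 \<and> t' = 0" "m2_det b = - (s'^2) + g*t'^2"
    using choose[OF two n(1)[symmetric] n(2) za zb] by blast
  define a' where "a' = M2 s t (-g*t) (-s)"
  define b' where "b' = M2 s' t' (-g*t') (-s')"
  have da': "m2_det a' = - (s^2) + g*t^2" unfolding a'_def by (simp add: power2_eq_square)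
  have db': "m2_det b' = - (s'^2) + g*t'^2" unfolding b'_def by (simp add: power2_eq_square)
  have "\<exists>\<phi>\<in>oct_aut. \<phi> (a, b) = (a', b')"
  proof (rule hmove[OF two ta])
    show "m2tr a' = 0" by (simp add: a'_def)
    show "a = m2_zero \<and> a' = m2_zero \<or> a \<noteq> m2_zero \<and> a' \<noteq> m2_zero \<and> m2_det a = m2_det a'"
      using G da' by (auto simp: a'_def m2_zero_def)
    show "b = m2_zero \<and> b' = m2_zero \<or> m2_det b \<noteq> 0 \<and> m2_det b = m2_det b'"
      using G db' zb by (auto simp: b'_def m2_zero_def)
  qed
  then obtain \<phi>1 where p1: "\<phi>1 \<in> oct_aut" "\<phi>1 (a, b) = (a', b')" by blast
  define b'' where "b'' = M2 (s - s') (-(t+t')) (g*(t'-t)) (s+s')"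
  have s2: "sig g (a', b') = (m2_zero, b'')" unfolding a'_def b'_def b''_def using sig_W[OF G(1) two] by simp
  have "m2_det b'' = - n" using G(4,6) n(1) unfolding b''_def by (simp add: power2_eq_square, algebra)
  have "\<exists>\<phi>\<in>oct_aut. \<phi> (m2_zero, b'') = (m2_zero, M2 0 1 n 0)"
    by (rule hmove[OF two]) (use \<open>m2_det b'' = - n\<close> n(2) in \<open>auto simp: m2_zero_def\<close>)
  then obtain \<phi>3 where p3: "\<phi>3 \<in> oct_aut" "\<phi>3 (m2_zero, b'') = (m2_zero, M2 0 1 n 0)" by blast
  have "(\<phi>3 \<circ> sig g \<circ> \<phi>1) \<in> oct_aut" using aut_comp p1(1) p3(1) sig_aut[OF G(1) two] by blast
  moreover have "(\<phi>3 \<circ> sig g \<circ> \<phi>1) (a, b) = (m2_zero, M2 0 1 n 0)" using p1 s2 p3 by simp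
  ultimately show ?thesis by blast
qed

lemma rowred:
  fixes b :: "'k::field mat2"
  assumes "m2_det b = 0" "b \<noteq> m2_zero"
  shows "\<exists>q x y. m2_det q = 1 \<and> m2_mult q b = M2 x y 0 0 \<and> (x \<noteq> 0 \<or> y \<noteq> 0)"
proof -
  obtain b1 b2 b3 b4 where B: "b = M2 b1 b2 b3 b4" by (cases b)
  have d: "b1*b4 = b2*b3" using assms B by simp
  show ?thesis
  proof (cases "b1 \<noteq> 0")
    case True
    show ?thesis
      by (rule exI[of _ "M2 1 0 (-b3/b1) 1"], rule exI[of _ b1], rule exI[of _ b2])
         (use True d in \<open>simp add: B field_simps\<close>)
  next
    case F1: False
    show ?thesis
    proof (cases "b2 \<noteq> 0")
      case True
      then have "b3 = 0" using d F1 by simp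
      show ?thesis
        by (rule exI[of _ "M2 1 0 (-b4/b2) 1"], rule exI[of _ 0], rule exI[of _ b2])
           (use True F1 \<open>b3 = 0\<close> in \<open>simp add: B field_simps\<close>)
    next
      case False
      then have "b3 \<noteq> 0 \<or> b4 \<noteq> 0" using F1 assms B by (auto simp: m2_zero_def)
      then show ?thesis using F1 False
        by (intro exI[of _ "M2 0 1 (-1) 0"] exI[of _ b3] exI[of _ b4]) (simp add: B)
    qed
  qed
qed

lemma sig_K:
  fixes g :: "'k::field"
  assumes "g \<noteq> 0" "(2::'k) \<noteq> 0"
  shows "snd (sig g (M2 0 1 (-n) 0, M2 x y 0 0)) =
    M2 (-x/2) (-n/(2*g) - (1+y)/2) ((g*(y-1) - n)/2) (x/2)"
  using assms by (simp add: sig_eq)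

lemma det_K1:
  fixes n :: "'k::field"
  assumes "n \<noteq> 0" "(2::'k) \<noteq> 0"
  shows "m2_det (snd (sig (-n) (M2 0 1 (-n) 0, M2 x y 0 0))) = -(x^2 + n*y^2)/4"
  using assms four_nz[OF assms(2)] by (simp add: sig_eq field_simps power2_eq_square)

lemma det_K2:
  fixes n :: "'k::field"
  assumes "n \<noteq> 0" "(2::'k) \<noteq> 0" "x^2 = -n"
  shows "m2_det (snd (sig n (M2 0 1 (-n) 0, M2 x 1 0 0))) = -n/2"
proof -
  have "m2_det (snd (sig n (M2 0 1 (-n) 0, M2 x 1 0 0))) = -(x^2)/4 - 3*n/4"
    using assms four_nz[OF assms(2)] by (simp add: sig_eq field_simps power2_eq_square)
  also have "\<dots> = -n/2" using assms(3) four_nz[OF assms(2)] assms(2) by (simp add: field_simps)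
  finally show ?thesis .
qed

lemma rank1:
  fixes a b :: "'k::field mat2"
  assumes two: "(2::'k) \<noteq> 0" and ta: "m2tr a = 0" and db: "m2_det b = 0" and bnz: "b \<noteq> m2_zero"
    and n: "m2_det a = n" "n \<noteq> 0"
  shows "\<exists>\<phi>\<in>oct_aut. \<exists>a3 b3. \<phi> (a, b) = (a3, b3) \<and> m2_det b3 \<noteq> 0"
proof -
  define K where "K = M2 0 1 (-n) (0::'k)"
  have anz: "a \<noteq> m2_zero" using n by (auto simp: m2_det_zero)
  obtain p where p: "m2_det p \<noteq> 0" "m2_mult p a = m2_mult K p"
    using companion[OF ta anz two] n K_def by auto
  define d where "d = m2_det p"
  define b1 where "b1 = m2_smult (1/d) (m2_mult p (m2_mult b (m2_conj p)))"
  have h1: "hmap p p (a, b) = (K, b1)"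
  proof -
    have "m2_mult p (m2_mult a (m2_conj p)) = m2_smult d K"
      by (simp add: p(2) d_def m2_conj_right0 m2_mult_smult m2_mult_one m2_mult_assoc flip: m2_mult_assoc[of p])
    then show ?thesis using p(1) by (simp add: hmap_def b1_def d_def m2_smult_smult m2_smult_one)
  qed
  have a1: "hmap p p \<in> oct_aut" using hmap_aut[OF p(1)] by simp
  have db1: "m2_det b1 = 0" by (simp add: b1_def m2_det_smult m2_det_mult db)
  have b1nz: "b1 \<noteq> m2_zero"
  proof
    assume "b1 = m2_zero"
    then have "m2_mult p (m2_mult b (m2_conj p)) = m2_zero"
      using p(1) unfolding b1_def d_def
      by (metis divide_eq_0_iff m2_smult_cancel m2_zero_mult(3) one_neq_zero)
    then have "m2_mult (m2_conj p) (m2_mult (m2_mult p (m2_mult b (m2_conj p))) p) = m2_zero"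
      by (simp add: m2_zero_mult)
    then have "m2_smult d (m2_smult d b) = m2_zero"
      by (simp add: m2_simps m2_conj_left0 m2_mult_one d_def)
    then have "b = m2_zero" using p(1) unfolding d_def
      by (metis m2_smult_cancel m2_zero_mult(3))
    then show False using bnz by simp
  qed
  obtain q x y where q: "m2_det q = 1" "m2_mult q b1 = M2 x y 0 0" "x \<noteq> 0 \<or> y \<noteq> 0"
    using rowred[OF db1 b1nz] by blast
  have h2: "hmap m2_one q (K, b1) = (K, M2 x y 0 0)"
    using q by (simp add: hmap_def m2_det_one m2_conj_one m2_one_mult m2_mult_one m2_smult_one)
  have a2: "hmap m2_one q \<in> oct_aut" using hmap_aut[of m2_one q] q by (simp add: m2_det_one)
  have "\<exists>\<phi>\<in>oct_aut. \<exists>a3 b3. \<phi> (K, M2 x y 0 0) = (a3, b3) \<and> m2_det b3 \<noteq> 0"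
  proof (cases "x^2 + n*y^2 = 0")
    case False
    have g: "-n \<noteq> 0" using n by simp
    have E: "m2_det (snd (sig (-n) (K, M2 x y 0 0))) = -(x^2 + n*y^2)/4"
      unfolding K_def using det_K1[OF n(2) two] by simp
    have "m2_det (snd (sig (-n) (K, M2 x y 0 0))) \<noteq> 0" unfolding E using False four_nz[OF two] by (metis divide_eq_0_iff neg_equal_0_iff_equal)
    then show ?thesis using sig_aut[OF g two] by (metis prod.collapse)
  next
    case True
    then have y: "y \<noteq> 0" using q(3) by auto
    define x' where "x' = x / y"
    have x': "x'^2 = -n" using True y unfolding x'_def
      by (simp add: field_simps power2_eq_square eq_neg_iff_add_eq_0)
    have h3: "hmap m2_one (M2 (1/y) 0 0 y) (K, M2 x y 0 0) = (K, M2 x' 1 0 0)"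
      using y by (simp add: hmap_def m2_det_one m2_conj_one m2_one_mult m2_mult_one m2_smult_one x'_def)
    have a3: "hmap m2_one (M2 (1/y) 0 0 y) \<in> oct_aut" using hmap_aut[of m2_one "M2 (1/y) 0 0 y"] y
      by (simp add: m2_det_one)
    have "m2_det (snd (sig n (K, M2 x' 1 0 0))) = -n/2"
      unfolding K_def using det_K2[OF n(2) two x'] by simp
    then have "m2_det (snd (sig n (K, M2 x' 1 0 0))) \<noteq> 0" using n(2) two by simp
    moreover have "sig n \<circ> hmap m2_one (M2 (1/y) 0 0 y) \<in> oct_aut"
      using aut_comp[OF a3 sig_aut[OF n(2) two]] .
    ultimately show ?thesis using h3 by (metis comp_apply prod.collapse)
  qed
  then obtain \<phi> a3 b3 where "\<phi> \<in> oct_aut" "\<phi> (K, M2 x y 0 0) = (a3, b3)" "m2_det b3 \<noteq> 0" by blast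
  moreover have "\<phi> \<circ> hmap m2_one q \<circ> hmap p p \<in> oct_aut" using aut_comp a1 a2 calculation(1) by blast
  ultimately show ?thesis using h1 h2 by (metis comp_apply)
qed

definition v0 :: "'k::field \<Rightarrow> 'k oct" where "v0 n = (m2_zero, M2 0 1 n 0)"

lemma to_v0:
  fixes v :: "'k::field oct"
  assumes v: "v \<in> oct_Vss" and two: "(2::'k) \<noteq> 0"
  shows "\<exists>\<phi>\<in>oct_aut. \<phi> v = v0 (oct_norm v)"
proof -
  obtain a b where ab: "v = (a, b)" by (cases v)
  have vV: "v \<in> oct_V" and nv: "oct_norm v \<noteq> 0" using v by (auto simp: oct_Vss_def)
  have ta: "m2tr a = 0" using vV ab oct_V_iff[of v] by (simp add: otr_m2tr)
  have N: "m2_det a - m2_det b = oct_norm v" using ab by (simp add: oct_norm_def)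
  show ?thesis
  proof (cases "b = m2_zero \<or> m2_det b \<noteq> 0")
    case True
    then show ?thesis using good[OF two ta N nv] ab by (simp add: v0_def)
  next
    case False
    then have db: "m2_det b = 0" "b \<noteq> m2_zero" by auto
    then obtain \<phi> a3 b3 where p: "\<phi> \<in> oct_aut" "\<phi> (a, b) = (a3, b3)" "m2_det b3 \<noteq> 0"
      using rank1[OF two ta db, of "oct_norm v"] N nv by auto
    have pres: "\<phi> v \<in> oct_V \<and> oct_norm (\<phi> v) = oct_norm v" using aut_preserve[OF p(1) vV nv two] .
    have ta3: "m2tr a3 = 0" using pres p(2) ab oct_V_iff[of "\<phi> v"] by (simp add: otr_m2tr)
    have N3: "m2_det a3 - m2_det b3 = oct_norm v" using pres p(2) ab by (simp add: oct_norm_def)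
    obtain \<psi> where "\<psi> \<in> oct_aut" "\<psi> (a3, b3) = (m2_zero, M2 0 1 (oct_norm v) 0)"
      using good[OF two ta3 N3 nv] p(3) by auto
    then show ?thesis using p ab aut_comp[OF p(1)] unfolding v0_def by (metis comp_apply)
  qed
qed

lemma sq_refl: "sq_class_eq s s" unfolding sq_class_eq_def by (rule exI[of _ 1]) simp
lemma sq_sym: assumes "sq_class_eq s t" shows "sq_class_eq t s"
proof -
  obtain c where c: "c \<noteq> 0" "t = c^2 * s" using assms unfolding sq_class_eq_def by blast
  then have "s = (1/c)^2 * t" by (simp add: field_simps power2_eq_square)
  then show ?thesis unfolding sq_class_eq_def using c(1) by (intro exI[of _ "1/c"]) simp
qed
lemma sq_trans: assumes "sq_class_eq s t" "sq_class_eq t u" shows "sq_class_eq s u"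
proof -
  obtain c where c: "c \<noteq> 0" "t = c^2 * s" using assms unfolding sq_class_eq_def by blast
  obtain d where d: "d \<noteq> 0" "u = d^2 * t" using assms unfolding sq_class_eq_def by blast
  have "u = (d*c)^2 * s" using c d by (simp add: power_mult_distrib)
  then show ?thesis unfolding sq_class_eq_def using c(1) d(1) by (intro exI[of _ "d*c"]) simp
qed

lemma Vss_smult:
  assumes "w \<in> oct_Vss" "c \<noteq> 0" shows "oct_smult c w \<in> oct_Vss"
  using assms oct_V_iff[of w] oct_V_iff[of "oct_smult c w"]
  by (auto simp: oct_Vss_def oct_norm_smult otr_smult)

lemma orbit_iff:
  fixes v w :: "'k::field oct"
  assumes two: "(2::'k) \<noteq> 0" and v: "v \<in> oct_Vss" and w: "w \<in> oct_Vss"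
  shows "(v, w) \<in> oct_orbit_rel \<longleftrightarrow> sq_class_eq (oct_norm v) (oct_norm w)"
proof
  assume "(v, w) \<in> oct_orbit_rel"
  then obtain \<phi> a where p: "\<phi> \<in> oct_aut" "a \<noteq> 0" "w = oct_smult a (\<phi> v)"
    unfolding oct_orbit_rel_def by blast
  have "oct_norm (\<phi> v) = oct_norm v" using aut_preserve[OF p(1)] v two by (auto simp: oct_Vss_def)
  then have "oct_norm w = a^2 * oct_norm v" using p(3) by (simp add: oct_norm_smult)
  then show "sq_class_eq (oct_norm v) (oct_norm w)" unfolding sq_class_eq_def using p(2) by blast
next
  assume "sq_class_eq (oct_norm v) (oct_norm w)"
  then obtain c where c: "c \<noteq> 0" "oct_norm w = c^2 * oct_norm v" unfolding sq_class_eq_def by blast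
  define w' where "w' = oct_smult (1/c) w"
  have w'V: "w' \<in> oct_Vss" unfolding w'_def using Vss_smult[OF w] c(1) by simp
  have nw': "oct_norm w' = oct_norm v" unfolding w'_def using c
    by (simp add: oct_norm_smult field_simps power2_eq_square)
  obtain \<phi> where p: "\<phi> \<in> oct_aut" "\<phi> v = v0 (oct_norm v)" using to_v0[OF v two] by blast
  obtain \<psi> where q: "\<psi> \<in> oct_aut" "\<psi> w' = v0 (oct_norm v)" using to_v0[OF w'V two] nw' by auto
  have "inv \<psi> \<circ> \<phi> \<in> oct_aut" using aut_comp[OF p(1) aut_inv[OF q(1)]] .
  moreover have "(inv \<psi> \<circ> \<phi>) v = w'" using p(2) q(2) inv_f_f[OF aut_inj[OF q(1)]] by (metis comp_apply)
  moreover have "w = oct_smult c w'" using c(1) by (simp add: w'_def oct_smult_smult oct_smult_1)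
  ultimately show "(v, w) \<in> oct_orbit_rel" unfolding oct_orbit_rel_def using v w c(1) by blast
qed

lemma v0_Vss: "t \<noteq> 0 \<Longrightarrow> v0 t \<in> oct_Vss \<and> oct_norm (v0 t) = t"
  using oct_V_iff[of "v0 t"]
  by (simp add: v0_def oct_Vss_def oct_norm_def m2_zero_def otr_m2tr)

lemma orbit_sub: "oct_orbit_rel \<subseteq> oct_Vss \<times> oct_Vss"
  unfolding oct_orbit_rel_def by auto

lemma orbit_equiv:
  assumes two: "(2::'k::field) \<noteq> 0"
  shows "equiv (oct_Vss :: 'k oct set) oct_orbit_rel"
proof (rule equivI)
  show "oct_orbit_rel \<subseteq> (oct_Vss :: 'k oct set) \<times> oct_Vss" by (rule orbit_sub)
  show "refl_on (oct_Vss :: 'k oct set) oct_orbit_rel"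
    unfolding refl_on_def using orbit_iff[OF two] sq_refl by blast
  show "sym (oct_orbit_rel :: ('k oct \<times> 'k oct) set)"
    unfolding sym_def using orbit_iff[OF two] sq_sym orbit_sub by blast
  show "trans (oct_orbit_rel :: ('k oct \<times> 'k oct) set)"
    unfolding trans_def using orbit_iff[OF two] sq_trans orbit_sub by blast
qed

definition Fm :: "'k::field \<Rightarrow> 'k \<times> 'k \<Rightarrow> 'k \<times> 'k \<Rightarrow> 'k \<times> 'k" where
  "Fm t x y = (fst x * fst y + t * (snd x * snd y), fst x * snd y + snd x * fst y)"
definition FN :: "'k::field \<Rightarrow> 'k \<times> 'k \<Rightarrow> 'k" where
  "FN t x = (fst x)^2 - t * (snd x)^2"

lemma v2_simps: "v2_add (a, b) (c, d) = (a + c, b + d)" "v2_smult s (a, b) = (s * a, s * b)"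
  by (simp_all add: v2_add_def v2_smult_def)

lemma FA_in:
  fixes t :: "'k::field"
  assumes two: "(2::'k) \<noteq> 0" and t: "t \<noteq> 0"
  shows "(Fm t, FN t) \<in> comp_alg2"
proof -
  have nd: "x = (0, 0)" if H: "\<forall>y. FN t (v2_add x y) - FN t x - FN t y = 0" for x :: "'k \<times> 'k"
  proof -
    obtain x1 x2 where X: "x = (x1, x2)" by (cases x)
    have "FN t (v2_add x (1,0)) - FN t x - FN t (1,0) = 0" using H by blast
    then have "2 * x1 = 0" by (simp add: X FN_def v2_simps algebra_simps power2_eq_square)
    moreover have "FN t (v2_add x (0,1)) - FN t x - FN t (0,1) = 0" using H by blast
    then have "2 * t * x2 = 0" by (simp add: X FN_def v2_simps algebra_simps power2_eq_square)
    ultimately show ?thesis using two t X by simp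
  qed
  show ?thesis unfolding comp_alg2_def
    apply (simp only: mem_Collect_eq case_prod_conv)
    apply (intro conjI)
    subgoal by (simp add: Fm_def v2_add_def algebra_simps)
    subgoal by (simp add: Fm_def v2_add_def algebra_simps)
    subgoal by (simp add: Fm_def v2_smult_def algebra_simps)
    subgoal by (simp add: Fm_def v2_smult_def algebra_simps)
    subgoal by (rule exI[of _ "(1,0)"]) (simp add: Fm_def)
    subgoal by (simp add: FN_def v2_smult_def algebra_simps power2_eq_square)
    subgoal by (simp add: FN_def v2_add_def algebra_simps power2_eq_square)
    subgoal using nd by blast
    subgoal by (simp add: Fm_def FN_def algebra_simps power2_eq_square)
    done
qed

lemma iso_iff: "((m, N), (m', N')) \<in> comp_alg2_iso \<longleftrightarrow> (m, N) \<in> comp_alg2 \<and> (m', N') \<in> comp_alg2 \<and>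
     (\<exists>f. bij f \<and> v2_linear f \<and> (\<forall>x y. f (m x y) = m' (f x) (f y)) \<and> (\<forall>x. N' (f x) = N x))"
  unfolding comp_alg2_iso_def by simp

lemma iso_refl: "(m, N) \<in> comp_alg2 \<Longrightarrow> ((m, N), (m, N)) \<in> comp_alg2_iso"
  unfolding iso_iff by (intro conjI exI[of _ id]) (auto simp: v2_linear_def)

lemma iso_sym:
  assumes "((m, N), (m', N')) \<in> comp_alg2_iso" shows "((m', N'), (m, N)) \<in> comp_alg2_iso"
proof -
  obtain f where f: "bij f" "v2_linear f" "\<forall>x y. f (m x y) = m' (f x) (f y)" "\<forall>x. N' (f x) = N x"
    and c: "(m, N) \<in> comp_alg2" "(m', N') \<in> comp_alg2" using assms unfolding iso_iff by blast
  have fi: "f (inv f x) = x" for x using f(1) by (simp add: bij_is_surj surj_f_inv_f)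
  have i: "inj f" using f(1) bij_is_inj by auto
  have fa: "f (v2_add x y) = v2_add (f x) (f y)" for x y using f(2) unfolding v2_linear_def by blast
  have fs: "f (v2_smult s x) = v2_smult s (f x)" for s x using f(2) unfolding v2_linear_def by blast
  have la: "inv f (v2_add x y) = v2_add (inv f x) (inv f y)" for x y
    by (rule injD[OF i]) (simp add: fi fa)
  have ls: "inv f (v2_smult s x) = v2_smult s (inv f x)" for s x
    by (rule injD[OF i]) (simp add: fi fs)
  have fm: "f (m x y) = m' (f x) (f y)" for x y using f(3) by blast
  have lm: "inv f (m' x y) = m (inv f x) (inv f y)" for x y
    by (rule injD[OF i]) (simp add: fi fm)
  have ln: "N (inv f x) = N' x" for x using f(4) fi by metis
  have "v2_linear (inv f)" unfolding v2_linear_def using la ls by blast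
  then show ?thesis unfolding iso_iff using c lm ln bij_imp_bij_inv[OF f(1)]
    by (intro conjI exI[of _ "inv f"]) auto
qed

lemma iso_trans:
  assumes "((m, N), (m', N')) \<in> comp_alg2_iso" "((m', N'), (m'', N'')) \<in> comp_alg2_iso"
  shows "((m, N), (m'', N'')) \<in> comp_alg2_iso"
proof -
  obtain f where f: "bij f" "v2_linear f" "\<forall>x y. f (m x y) = m' (f x) (f y)" "\<forall>x. N' (f x) = N x"
    and c: "(m, N) \<in> comp_alg2" using assms(1) unfolding iso_iff by blast
  obtain g where g: "bij g" "v2_linear g" "\<forall>x y. g (m' x y) = m'' (g x) (g y)" "\<forall>x. N'' (g x) = N' x"
    and c': "(m'', N'') \<in> comp_alg2" using assms(2) unfolding iso_iff by blast
  have fa: "f (v2_add x y) = v2_add (f x) (f y)" for x y using f(2) unfolding v2_linear_def by blast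
  have fs: "f (v2_smult s x) = v2_smult s (f x)" for s x using f(2) unfolding v2_linear_def by blast
  have ga: "g (v2_add x y) = v2_add (g x) (g y)" for x y using g(2) unfolding v2_linear_def by blast
  have gs: "g (v2_smult s x) = v2_smult s (g x)" for s x using g(2) unfolding v2_linear_def by blast
  have "v2_linear (g \<circ> f)" unfolding v2_linear_def by (simp add: fa fs ga gs)
  moreover have "\<forall>x y. (g \<circ> f) (m x y) = m'' ((g \<circ> f) x) ((g \<circ> f) y)"
  proof (intro allI)
    fix x y
    have "f (m x y) = m' (f x) (f y)" using f(3) by blast
    moreover have "g (m' (f x) (f y)) = m'' (g (f x)) (g (f y))" using g(3) by blast
    ultimately show "(g \<circ> f) (m x y) = m'' ((g \<circ> f) x) ((g \<circ> f) y)" by simp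
  qed
  moreover have "\<forall>x. N'' ((g \<circ> f) x) = N x"
  proof
    fix x
    have "N' (f x) = N x" using f(4) by blast
    moreover have "N'' (g (f x)) = N' (f x)" using g(4) by blast
    ultimately show "N'' ((g \<circ> f) x) = N x" by simp
  qed
  ultimately show ?thesis unfolding iso_iff using c c' bij_comp[OF f(1) g(1)] by blast
qed

lemma iso_equiv: "equiv comp_alg2 comp_alg2_iso"
proof (rule equivI)
  show "comp_alg2_iso \<subseteq> comp_alg2 \<times> comp_alg2" unfolding comp_alg2_iso_def by auto
  show "refl_on comp_alg2 comp_alg2_iso" unfolding refl_on_def using iso_refl by auto
  show "sym comp_alg2_iso" unfolding sym_def using iso_sym by auto
  show "trans comp_alg2_iso" unfolding trans_def using iso_trans by fast
qed

lemma FA_iso_sq: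
  fixes s t :: "'k::field"
  assumes two: "(2::'k) \<noteq> 0" and s: "s \<noteq> 0" and t: "t \<noteq> 0"
  shows "((Fm s, FN s), (Fm t, FN t)) \<in> comp_alg2_iso \<longleftrightarrow> sq_class_eq s t"
proof
  assume "sq_class_eq s t"
  then obtain c where c: "c \<noteq> 0" "t = c^2 * s" unfolding sq_class_eq_def by blast
  define f :: "'k \<times> 'k \<Rightarrow> 'k \<times> 'k" where "f x = (fst x, snd x / c)" for x
  define g :: "'k \<times> 'k \<Rightarrow> 'k \<times> 'k" where "g x = (fst x, snd x * c)" for x
  have "f \<circ> g = id" "g \<circ> f = id" using c by (auto simp: f_def g_def)
  then have "bij f" using o_bij by blast
  moreover have "v2_linear f" by (simp add: v2_linear_def f_def v2_add_def v2_smult_def add_divide_distrib)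
  moreover have "\<forall>x y. f (Fm s x y) = Fm t (f x) (f y)"
    using c by (simp add: f_def Fm_def field_simps power2_eq_square)
  moreover have "\<forall>x. FN t (f x) = FN s x"
    using c by (simp add: f_def FN_def field_simps power2_eq_square)
  ultimately show "((Fm s, FN s), (Fm t, FN t)) \<in> comp_alg2_iso"
    unfolding iso_iff using FA_in[OF two s] FA_in[OF two t] by blast
next
  assume "((Fm s, FN s), (Fm t, FN t)) \<in> comp_alg2_iso"
  then obtain f where f: "bij f" "v2_linear f" "\<forall>x y. f (Fm s x y) = Fm t (f x) (f y)"
    unfolding iso_iff by blast
  obtain u1 u2 where u: "f (1, 0) = (u1, u2)" by (cases "f (1,0)")
  have "f (0,1) = f (Fm s (1,0) (0,1))" by (simp add: Fm_def)
  also have "\<dots> = Fm t (u1, u2) (f (0,1))" using f(3) u by simp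
  finally have "f (0,1) = Fm t (u1, u2) (f (0,1))" .
  have "f (1,0) = f (Fm s (1,0) (1,0))" by (simp add: Fm_def)
  also have "\<dots> = Fm t (u1,u2) (u1,u2)" using f(3) u by simp
  finally have uu: "(u1, u2) = Fm t (u1,u2) (u1,u2)" using u by simp
  have lin: "f (v2_smult a x) = v2_smult a (f x)" for a x using f(2) unfolding v2_linear_def by blast
  \<comment> \<open>(u1,u2) is an idempotent; show it is (1,0) using the image of (1,0) acting as identity\<close>
  have idl: "Fm t (u1, u2) (f y) = f y" for y
  proof -
    have "Fm s (1,0) y = y" by (simp add: Fm_def)
    then show ?thesis using f(3) u by metis
  qed
  have surj: "surj f" using f(1) bij_is_surj by auto
  have "Fm t (u1, u2) (1, 0) = (1, 0)" using idl surj by (metis surjD)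
  then have U: "u1 = 1" "u2 = 0" by (simp_all add: Fm_def)
  obtain p q where pq: "f (0,1) = (p, q)" by (cases "f (0,1)")
  have "f (s, 0) = f (Fm s (0,1) (0,1))" by (simp add: Fm_def)
  also have "\<dots> = Fm t (p,q) (p,q)" using f(3) pq by simp
  finally have E: "f (s, 0) = (p*p + t*(q*q), p*q + q*p)" by (simp add: Fm_def)
  have "f (s, 0) = f (v2_smult s (1,0))" by (simp add: v2_smult_def)
  also have "\<dots> = v2_smult s (f (1,0))" by (rule lin)
  also have "\<dots> = (s, 0)" using u U by (simp add: v2_smult_def)
  finally have E2: "p*p + t*(q*q) = s" "p*q + q*p = 0" using E by auto
  have "p * q = 0" using E2(2) two by (metis mult_2 mult.commute mult_eq_0_iff)
  moreover have "q \<noteq> 0"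
  proof
    assume q0: "q = 0"
    have "f (v2_smult p (1,0)) = v2_smult p (f (1,0))" by (rule lin)
    also have "\<dots> = (p, 0)" using u U by (simp add: v2_smult_def)
    also have "\<dots> = f (0,1)" using pq q0 by simp
    finally have "f (0,1) = f (v2_smult p (1,0))" by simp
    then have "(0::'k,1::'k) = v2_smult p (1,0)" using f(1) bij_is_inj by (metis injD)
    then show False by (simp add: v2_smult_def)
  qed
  ultimately have "p = 0" by simp
  then have "s = q^2 * t" using E2(1) by (simp add: power2_eq_square mult.commute)
  then have "t = (1/q)^2 * s" using \<open>q \<noteq> 0\<close> by (simp add: field_simps power2_eq_square)
  then show "sq_class_eq s t" unfolding sq_class_eq_def using \<open>q \<noteq> 0\<close> by (intro exI[of _ "1/q"]) simp
qed

definition cA :: "'k::field \<times> 'k \<Rightarrow> 'k \<times> 'k \<Rightarrow> 'k \<times> 'k \<Rightarrow> 'k" where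
  "cA u w x = (fst x * snd w - snd x * fst w) / (fst u * snd w - snd u * fst w)"
definition cB :: "'k::field \<times> 'k \<Rightarrow> 'k \<times> 'k \<Rightarrow> 'k \<times> 'k \<Rightarrow> 'k" where
  "cB u w x = (fst u * snd x - snd u * fst x) / (fst u * snd w - snd u * fst w)"

lemma spec2: "\<forall>a b. P a b \<Longrightarrow> P a b" by blast
lemma spec3: "\<forall>a b c. P a b c \<Longrightarrow> P a b c" by blast

lemma coords:
  fixes u w x :: "'k::field \<times> 'k"
  assumes D: "fst u * snd w - snd u * fst w \<noteq> 0"
  shows "x = v2_add (v2_smult ((fst x * snd w - snd x * fst w) / (fst u * snd w - snd u * fst w)) u)
                    (v2_smult ((fst u * snd x - snd u * fst x) / (fst u * snd w - snd u * fst w)) w)"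
proof -
  obtain x1 x2 u1 u2 w1 w2 where U: "x = (x1, x2)" "u = (u1, u2)" "w = (w1, w2)"
    by (cases x; cases u; cases w)
  define D where "D = u1*w2 - u2*w1"
  have D0: "D \<noteq> 0" using D U D_def by simp
  have i1: "(x1*w2 - x2*w1)*u1 + (u1*x2 - u2*x1)*w1 = x1 * D" unfolding D_def by (simp add: algebra_simps)
  have i2: "(x1*w2 - x2*w1)*u2 + (u1*x2 - u2*x1)*w2 = x2 * D" unfolding D_def by (simp add: algebra_simps)
  have "(x1*w2 - x2*w1)/D*u1 + (u1*x2 - u2*x1)/D*w1 = x1"
    using i1 D0 by (simp add: divide_simps)
  moreover have "(x1*w2 - x2*w1)/D*u2 + (u1*x2 - u2*x1)/D*w2 = x2"
    using i2 D0 by (simp add: divide_simps)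
  ultimately show ?thesis unfolding U by (simp add: v2_simps D_def)
qed

lemma coords': "fst u * snd w - snd u * fst w \<noteq> 0 \<Longrightarrow> x = v2_add (v2_smult (cA u w x) u) (v2_smult (cB u w x) w)"
  unfolding cA_def cB_def by (rule coords)

lemma coords_uniq:
  fixes u w :: "'k::field \<times> 'k"
  assumes D: "fst u * snd w - snd u * fst w \<noteq> 0"
    and E: "v2_add (v2_smult a u) (v2_smult b w) = v2_add (v2_smult a' u) (v2_smult b' w)"
  shows "a = a' \<and> b = b'"
proof -
  obtain u1 u2 w1 w2 where U: "u = (u1, u2)" "w = (w1, w2)" by (cases u; cases w)
  have e1: "a*u1 + b*w1 = a'*u1 + b'*w1" and e2: "a*u2 + b*w2 = a'*u2 + b'*w2"
    using E by (simp_all add: U v2_simps)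
  have "(a - a') * (u1*w2 - u2*w1) = 0"
  proof -
    have "(a - a') * (u1*w2 - u2*w1) = (a*u1 + b*w1 - (a'*u1 + b'*w1))*w2 - (a*u2 + b*w2 - (a'*u2 + b'*w2))*w1"
      by (simp add: algebra_simps)
    then show ?thesis using e1 e2 by simp
  qed
  moreover have "(b - b') * (u1*w2 - u2*w1) = 0"
  proof -
    have "(b - b') * (u1*w2 - u2*w1) = (a*u2 + b*w2 - (a'*u2 + b'*w2))*u1 - (a*u1 + b*w1 - (a'*u1 + b'*w1))*u2"
      by (simp add: algebra_simps)
    then show ?thesis using e1 e2 by simp
  qed
  ultimately show ?thesis using D U by simp
qed

lemma v2_laws:
  "v2_add x y = v2_add y x"
  "v2_add (v2_add x y) z = v2_add x (v2_add y z)"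
  "v2_smult (a + b) x = v2_add (v2_smult a x) (v2_smult b x)"
  "v2_smult a (v2_smult b x) = v2_smult (a * b) x"
  "v2_smult 1 x = x"
  "v2_smult a (v2_add x y) = v2_add (v2_smult a x) (v2_smult a y)"
  by (cases x; cases y; cases z; simp add: v2_simps algebra_simps)+

context
  fixes m :: "'k::field \<times> 'k \<Rightarrow> 'k \<times> 'k \<Rightarrow> 'k \<times> 'k" and N :: "'k \<times> 'k \<Rightarrow> 'k"
  assumes CA: "(m, N) \<in> comp_alg2" and two: "(2::'k) \<noteq> 0"
begin

lemma CAP: "(\<forall>x y z. m (v2_add x y) z = v2_add (m x z) (m y z))
     \<and> (\<forall>x y z. m x (v2_add y z) = v2_add (m x y) (m x z))
     \<and> (\<forall>s x y. m (v2_smult s x) y = v2_smult s (m x y))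
     \<and> (\<forall>s x y. m x (v2_smult s y) = v2_smult s (m x y))
     \<and> (\<exists>e. \<forall>x. m e x = x \<and> m x e = x)
     \<and> (\<forall>s x. N (v2_smult s x) = s^2 * N x)
     \<and> (\<forall>x y z. N (v2_add (v2_add x y) z) - N (v2_add x y) - N z
                = (N (v2_add x z) - N x - N z) + (N (v2_add y z) - N y - N z))
     \<and> (\<forall>x. (\<forall>y. N (v2_add x y) - N x - N y = 0) \<longrightarrow> x = (0, 0))
     \<and> (\<forall>x y. N (m x y) = N x * N y)"
  using CA unfolding comp_alg2_def by simp

lemma CAP1: "\<forall>x y z. m (v2_add x y) z = v2_add (m x z) (m y z)" using CAP by (elim conjE) assumption
lemma CAP2: "\<forall>x y z. m x (v2_add y z) = v2_add (m x y) (m x z)" using CAP by (elim conjE) assumption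
lemma CAP3: "\<forall>s x y. m (v2_smult s x) y = v2_smult s (m x y)" using CAP by (elim conjE) assumption
lemma CAP4: "\<forall>s x y. m x (v2_smult s y) = v2_smult s (m x y)" using CAP by (elim conjE) assumption
lemma CAP5: "\<exists>e. \<forall>x. m e x = x \<and> m x e = x" using CAP by (elim conjE) assumption
lemma CAP6: "\<forall>s x. N (v2_smult s x) = s^2 * N x" using CAP by (elim conjE) assumption
lemma CAP7: "\<forall>x y z. N (v2_add (v2_add x y) z) - N (v2_add x y) - N z
                = (N (v2_add x z) - N x - N z) + (N (v2_add y z) - N y - N z)" using CAP by (elim conjE) assumption
lemma CAP8: "\<forall>x. (\<forall>y. N (v2_add x y) - N x - N y = 0) \<longrightarrow> x = (0, 0)" using CAP by (elim conjE) assumption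
lemma CAP9: "\<forall>x y. N (m x y) = N x * N y" using CAP by (elim conjE) assumption

lemma madd1: "m (v2_add x y) z = v2_add (m x z) (m y z)" using CAP1 by (rule spec3)
lemma madd2: "m x (v2_add y z) = v2_add (m x y) (m x z)" using CAP2 by (rule spec3)
lemma msm1: "m (v2_smult s x) y = v2_smult s (m x y)" using CAP3 by (rule spec3)
lemma msm2: "m x (v2_smult s y) = v2_smult s (m x y)" using CAP4 by (rule spec3)
lemma Nsm: "N (v2_smult s x) = s^2 * N x" using CAP6 by (rule spec2)
lemma Npol: "N (v2_add (v2_add x y) z) - N (v2_add x y) - N z
                = (N (v2_add x z) - N x - N z) + (N (v2_add y z) - N y - N z)" using CAP7 by (rule spec3)
lemma Nnd: "(\<And>y. N (v2_add x y) - N x - N y = 0) \<Longrightarrow> x = (0, 0)" using CAP8 by blast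
lemma Nmul: "N (m x y) = N x * N y" using CAP9 by (rule spec2)

definition ue where "ue = (SOME e. \<forall>x. m e x = x \<and> m x e = x)"
lemma ue: "m ue x = x" "m x ue = x"
proof -
  have "\<exists>e. \<forall>x. m e x = x \<and> m x e = x" using CAP5 .
  then have H: "\<forall>x. m ue x = x \<and> m x ue = x" unfolding ue_def by (rule someI_ex)
  show "m ue x = x" using H by blast
  show "m x ue = x" using H by blast
qed

definition Bf where "Bf x y = N (v2_add x y) - N x - N y"
definition Tf where "Tf x = Bf x ue"

lemma N0: "N (0, 0) = 0"
  using Nsm[of 0 "(0,0)"] by (simp add: v2_simps)
lemma Bsym: "Bf x y = Bf y x" unfolding Bf_def by (simp add: v2_laws(1))
lemma Badd1: "Bf (v2_add x y) z = Bf x z + Bf y z" unfolding Bf_def using Npol by simp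
lemma Badd2: "Bf z (v2_add x y) = Bf z x + Bf z y" using Badd1 Bsym by metis
lemma Bxx: "Bf x x = 2 * N x"
proof -
  have "v2_add x x = v2_smult 2 x" by (cases x) (simp add: v2_simps)
  then show ?thesis unfolding Bf_def using Nsm[of 2 x] by (simp add: algebra_simps power2_eq_square)
qed

lemma Ne: "N ue = 1"
proof -
  have "\<exists>x. N x \<noteq> 0"
  proof (rule ccontr)
    assume "\<not> (\<exists>x. N x \<noteq> 0)"
    then have Z: "N x = 0" for x by blast
    have "(1::'k, 0::'k) = (0, 0)" by (intro Nnd) (simp add: Z)
    then show False by simp
  qed
  then obtain x where "N x \<noteq> 0" by blast
  moreover have "N x = N ue * N x" using Nmul[of ue x] ue by simp
  ultimately show ?thesis by simp
qed

lemma L1: "Bf (m u x) (m u y) = N u * Bf x y"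
proof -
  have "N (m u (v2_add x y)) = N u * N (v2_add x y)" by (rule Nmul)
  then show ?thesis unfolding Bf_def by (simp add: madd2 Nmul algebra_simps)
qed

lemma L2: "Bf (m u x) (m v y) + Bf (m v x) (m u y) = Bf u v * Bf x y"
proof -
  have "Bf (m (v2_add u v) x) (m (v2_add u v) y) = N (v2_add u v) * Bf x y" by (rule L1)
  then have "Bf (m u x) (m u y) + Bf (m u x) (m v y) + (Bf (m v x) (m u y) + Bf (m v x) (m v y))
     = N (v2_add u v) * Bf x y" by (simp add: madd1 Badd1 Badd2 algebra_simps)
  then have "N u * Bf x y + Bf (m u x) (m v y) + (Bf (m v x) (m u y) + N v * Bf x y)
     = N (v2_add u v) * Bf x y" by (simp add: L1)
  moreover have "N (v2_add u v) = N u + N v + Bf u v" unfolding Bf_def by simp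
  ultimately show ?thesis by (simp add: algebra_simps)
qed

lemma twoN: "2 * N x = (Tf x)^2 - Tf (m x x)"
proof -
  have "Bf (m x x) (m ue ue) + Bf (m ue x) (m x ue) = Bf x ue * Bf x ue" by (rule L2)
  then show ?thesis unfolding Tf_def by (simp add: ue Bxx power2_eq_square algebra_simps)
qed

lemma Tadd: "Tf (v2_add x y) = Tf x + Tf y" unfolding Tf_def by (rule Badd1)

lemma Tsme: "Tf (v2_smult a ue) = 2 * a"
proof -
  have "v2_add (v2_smult a ue) ue = v2_smult (a + 1) ue" by (simp add: v2_laws)
  then show ?thesis unfolding Tf_def Bf_def by (simp add: Nsm Ne power2_eq_square algebra_simps)
qed

lemma N0': "N (v2_smult 0 x) = 0" by (simp add: Nsm)

lemma ue_nz: "ue \<noteq> (0, 0)" using Ne N0 by auto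

definition f0 :: "'k \<times> 'k" where "f0 = (if snd ue \<noteq> 0 then (1, 0) else (0, 1))"

lemma D0: "fst ue * snd f0 - snd ue * fst f0 \<noteq> 0"
  using ue_nz by (cases ue) (auto simp: f0_def)

definition al where "al = cA ue f0 (m f0 f0)"
definition be where "be = cB ue f0 (m f0 f0)"
definition jj where "jj = v2_add f0 (v2_smult (-(be/2)) ue)"
definition a0 where "a0 = al + be^2/4"

lemma mff: "m f0 f0 = v2_add (v2_smult al ue) (v2_smult be f0)"
  unfolding al_def be_def by (rule coords'[OF D0])

lemma Dj: "fst ue * snd jj - snd ue * fst jj \<noteq> 0"
proof -
  have "fst ue * snd jj - snd ue * fst jj = fst ue * snd f0 - snd ue * fst f0"
    by (cases ue; cases f0) (simp add: jj_def v2_simps algebra_simps)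
  then show ?thesis using D0 by simp
qed

lemma mjj: "m jj jj = v2_smult a0 ue"
proof -
  define c where "c = -(be/2)"
  have hb: "be = -2*c" unfolding c_def using two by simp
  have ha: "a0 = al + c*c" unfolding c_def a0_def using two four_nz[OF two]
    by (simp add: field_simps power2_eq_square)
  show ?thesis
    unfolding jj_def c_def[symmetric]
    apply (simp add: madd1 madd2 msm1 msm2 ue v2_laws(6))
    unfolding mff ha
    apply (cases ue; cases f0)
    apply (simp add: v2_simps algebra_simps hb)
    done
qed

definition g :: "'k \<times> 'k \<Rightarrow> 'k \<times> 'k" where "g x = v2_add (v2_smult (fst x) ue) (v2_smult (snd x) jj)"

lemma g_add: "g (v2_add x y) = v2_add (g x) (g y)"
  unfolding g_def by (cases x; cases y; cases ue; cases jj) (simp add: v2_simps algebra_simps)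
lemma g_sm: "g (v2_smult s x) = v2_smult s (g x)"
  unfolding g_def by (cases x; cases ue; cases jj) (simp add: v2_simps algebra_simps)
lemma g_inj: "inj g"
proof (rule injI)
  fix x y assume "g x = g y"
  then have "fst x = fst y \<and> snd x = snd y" unfolding g_def by (rule coords_uniq[OF Dj])
  then show "x = y" by (simp add: prod_eq_iff)
qed
lemma g_surj: "y = g (cA ue jj y, cB ue jj y)"
  unfolding g_def using coords'[OF Dj] by simp
lemma g_bij: "bij g"
proof -
  have "surj g" by (rule surjI[of g "\<lambda>y. (cA ue jj y, cB ue jj y)"]) (rule g_surj[symmetric])
  then show ?thesis using g_inj by (simp add: bij_def)
qed
lemma g_lin: "v2_linear g" unfolding v2_linear_def using g_add g_sm by blast
lemma g_00: "g (0, 0) = (0, 0)" unfolding g_def by (cases ue; cases jj) (simp add: v2_simps)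
lemma g_01: "g (0, 1) = jj" unfolding g_def by (cases jj; cases ue) (simp add: v2_simps)

lemma g_mult: "m (g x) (g y) = g (Fm a0 x y)"
  unfolding g_def Fm_def
  apply (simp add: madd1 madd2 msm1 msm2 ue mjj v2_laws(6))
  apply (cases ue; cases jj)
  apply (simp add: v2_simps algebra_simps)
  done

definition cc where "cc = Tf jj"

lemma Tg: "Tf (g x) = 2 * fst x + Tf (v2_smult (snd x) jj)"
  unfolding g_def by (simp add: Tadd Tsme)

lemma tau_sq: "(Tf (v2_smult b jj))^2 = b^2 * cc^2"
proof -
  have A: "2 * N (v2_smult b jj) = (Tf (v2_smult b jj))^2 - Tf (m (v2_smult b jj) (v2_smult b jj))" by (rule twoN)
  have "m (v2_smult b jj) (v2_smult b jj) = v2_smult (b*b*a0) ue" by (simp add: msm1 msm2 mjj v2_laws mult.assoc)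
  then have B: "Tf (m (v2_smult b jj) (v2_smult b jj)) = 2 * (b*b*a0)" by (simp add: Tsme)
  have C: "2 * N jj = cc^2 - 2 * a0" using twoN[of jj] by (simp add: mjj Tsme cc_def)
  have D: "N (v2_smult b jj) = b^2 * N jj" by (rule Nsm)
  show ?thesis using A B C D by algebra
qed

lemma tau_lin: "Tf (v2_smult b jj) = b * cc"
proof -
  define t where "t = Tf (v2_smult b jj)"
  have "v2_smult (b + 1) jj = v2_add (v2_smult b jj) jj" by (simp add: v2_laws)
  then have t1: "Tf (v2_smult (b+1) jj) = t + cc" by (simp add: Tadd t_def cc_def)
  have s1: "t^2 = b^2 * cc^2" using tau_sq t_def by simp
  have s2: "(t + cc)^2 = (b+1)^2 * cc^2" using tau_sq[of "b+1"] t1 by simp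
  have "2 * (cc * (t - b * cc)) = 0" using s1 s2 by algebra
  then have "cc * (t - b * cc) = 0" using two by simp
  then consider "cc = 0" | "t = b * cc" by auto
  then show ?thesis
  proof cases
    case 1 then show ?thesis using s1 t_def by simp
  qed (simp add: t_def)
qed

lemma Tg2: "Tf (g x) = 2 * fst x + snd x * cc"
  using Tg tau_lin by simp

lemma Ng: "2 * N (g x) = (2 * fst x + snd x * cc)^2 - (2 * (fst x^2 + a0 * snd x^2) + 2 * fst x * snd x * cc)"
proof -
  have "m (g x) (g x) = g (fst x * fst x + a0 * (snd x * snd x), fst x * snd x + snd x * fst x)"
    by (simp add: g_mult Fm_def)
  then have "Tf (m (g x) (g x)) = 2 * (fst x^2 + a0 * snd x^2) + 2 * fst x * snd x * cc"
    by (simp add: Tg2 algebra_simps power2_eq_square)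
  then show ?thesis using twoN[of "g x"] Tg2[of x] by simp
qed

lemma Ng': "2 * N (g (a, b)) = (2 * a + b * cc)^2 - (2 * (a^2 + a0 * b^2) + 2 * a * b * cc)"
  using Ng[of "(a, b)"] by simp

lemma cc0: "cc = 0"
proof (rule ccontr)
  assume ccn: "cc \<noteq> 0"
  define \<nu> where "\<nu> = N jj"
  have e1: "2 * \<nu> = cc^2 - 2 * a0" using Ng'[of 0 1] g_01 \<nu>_def by (simp add: algebra_simps power2_eq_square)
  have "N (m jj jj) = \<nu> * \<nu>" using Nmul \<nu>_def by simp
  moreover have "m jj jj = g (a0, 0)" unfolding mjj by (cases ue; cases jj) (simp add: g_def v2_simps)
  ultimately have "2 * (\<nu> * \<nu>) = (2 * a0)^2 - 2 * a0^2" using Ng'[of a0 0] by simp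
  then have e2: "a0^2 = \<nu>^2" using two by (simp add: algebra_simps power2_eq_square)
  have "m jj (g (1, 1)) = g (a0, 1)" using g_mult[of "(0,1)" "(1,1)"] g_01 by (simp add: Fm_def)
  then have e3: "N (g (a0, 1)) = \<nu> * N (g (1, 1))" using Nmul \<nu>_def by metis
  have e4: "2 * N (g (a0, 1)) = (2 * a0 + cc)^2 - (2 * (a0^2 + a0) + 2 * a0 * cc)" using Ng'[of a0 1] by simp
  have e5: "2 * N (g (1, 1)) = (2 + cc)^2 - (2 * (1 + a0) + 2 * cc)" using Ng'[of 1 1] by simp
  have "2 * (a0 * cc - \<nu> * cc) = 0" using e1 e2 e3 e4 e5 by algebra
  then have "a0 = \<nu>" using two ccn by (simp add: algebra_simps)
  then have a4: "4 * a0 = cc^2" using e1 by (simp add: algebra_simps)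
  have Nsq: "N (g (a, b)) = (a + b * cc / 2)^2" for a b
  proof -
    have "2 * N (g (a, b)) = 2 * (a + b * cc / 2)^2"
      using Ng'[of a b] a4 two four_nz[OF two] by (simp add: field_simps power2_eq_square) algebra
    then show ?thesis using two by simp
  qed
  define x0 where "x0 = g (-(cc/2), 1)"
  have "x0 = (0, 0)"
  proof (rule Nnd)
    fix y
    obtain p q where y: "y = g (p, q)" using g_surj by blast
    have E: "v2_add x0 y = g (p - cc/2, q + 1)" unfolding x0_def y g_add[symmetric] by (simp add: v2_simps add.commute)
    have e1: "N (v2_add x0 y) = (p - cc/2 + (q+1)*cc/2)^2" by (simp only: E Nsq)
    have e2: "N x0 = (-(cc/2) + 1*cc/2)^2" unfolding x0_def by (simp only: Nsq)
    have e3: "N y = (p + q*cc/2)^2" unfolding y by (simp only: Nsq)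
    have eq: "p - cc/2 + (q+1)*cc/2 = p + q*cc/2" by (simp add: distrib_right add_divide_distrib)
    show "N (v2_add x0 y) - N x0 - N y = 0" unfolding e1 e2 e3 eq by simp
  qed
  then have "g (-(cc/2), 1) = g (0, 0)" using g_00 x0_def by simp
  then show False using g_inj by (auto dest: injD)
qed

lemma a0nz: "a0 \<noteq> 0"
proof
  assume a0z: "a0 = 0"
  have Nsq: "N (g (a, b)) = a^2" for a b using Ng'[of a b] cc0 a0z two by (simp add: power2_eq_square algebra_simps)
  have "jj = (0, 0)"
  proof (rule Nnd)
    fix y
    obtain p q where y: "y = g (p, q)" using g_surj by blast
    have "v2_add jj y = g (p, q + 1)" unfolding y g_01[symmetric] g_add[symmetric] by (simp add: v2_simps add.commute)
    then show "N (v2_add jj y) - N jj - N y = 0" unfolding y by (simp add: Nsq flip: g_01)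
  qed
  then have "g (0, 1) = g (0, 0)" using g_00 g_01 by simp
  then show False using g_inj by (auto dest: injD)
qed

lemma Ng2: "N (g x) = FN a0 x"
proof -
  have H: "2 * N (g x) = 2 * (fst x^2 - a0 * snd x^2)" using Ng[of x] cc0 by (simp add: algebra_simps power2_eq_square)
  have "N (g x) = fst x^2 - a0 * snd x^2" using mult_left_cancel[OF two] H by blast
  then show ?thesis unfolding FN_def by simp
qed

lemma classify: "\<exists>t. t \<noteq> 0 \<and> ((Fm t, FN t), (m, N)) \<in> comp_alg2_iso"
proof (intro exI conjI)
  show "a0 \<noteq> 0" by (rule a0nz)
  show "((Fm a0, FN a0), (m, N)) \<in> comp_alg2_iso"
    unfolding iso_iff using FA_in[OF two a0nz] CA g_bij g_lin g_mult Ng2 by metis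
qed

end

lemma class_eq_FA:
  fixes v :: "'k::field oct"
  assumes two: "(2::'k) \<noteq> 0" and v: "v \<in> oct_Vss"
  shows "comp_alg2_iso `` {(Fm (oct_norm (SOME w. w \<in> oct_orbit_rel `` {v})), FN (oct_norm (SOME w. w \<in> oct_orbit_rel `` {v})))}
       = comp_alg2_iso `` {(Fm (oct_norm v), FN (oct_norm v))}"
proof -
  define w where "w = (SOME w. w \<in> oct_orbit_rel `` {v})"
  have "v \<in> oct_orbit_rel `` {v}" using equiv_class_self[OF orbit_equiv[OF two] v] .
  then have "w \<in> oct_orbit_rel `` {v}" unfolding w_def by (rule someI)
  then have vw: "(v, w) \<in> oct_orbit_rel" by simp
  then have w: "w \<in> oct_Vss" using orbit_sub by auto
  have nv: "oct_norm v \<noteq> 0" and nw: "oct_norm w \<noteq> 0" using v w by (auto simp: oct_Vss_def)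
  have "sq_class_eq (oct_norm v) (oct_norm w)" using orbit_iff[OF two v w] vw by simp
  then have "sq_class_eq (oct_norm w) (oct_norm v)" by (rule sq_sym)
  then have "((Fm (oct_norm w), FN (oct_norm w)), (Fm (oct_norm v), FN (oct_norm v))) \<in> comp_alg2_iso"
    using FA_iso_sq[OF two nw nv] by simp
  then show ?thesis unfolding w_def[symmetric] by (rule equiv_class_eq[OF iso_equiv])
qed

theorem theorem5p10:
  fixes dummy :: "'k::field"
  assumes char: "(2::'k) \<noteq> 0"
  shows "(\<forall>v \<in> (oct_Vss :: 'k oct set). \<forall>w \<in> oct_Vss.
            (v, w) \<in> oct_orbit_rel \<longleftrightarrow> sq_class_eq (oct_norm v) (oct_norm w))
       \<and> (\<forall>t::'k. t \<noteq> 0 \<longrightarrow> (\<exists>v \<in> oct_Vss. sq_class_eq (oct_norm v) t))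
       \<and> (\<exists>f. bij_betw f ((oct_Vss :: 'k oct set) // oct_orbit_rel)
                         ((comp_alg2 :: ((_ \<Rightarrow> _ \<Rightarrow> 'k \<times> 'k) \<times> _) set) // comp_alg2_iso))"
proof (intro conjI)
  show "\<forall>v \<in> (oct_Vss :: 'k oct set). \<forall>w \<in> oct_Vss.
            (v, w) \<in> oct_orbit_rel \<longleftrightarrow> sq_class_eq (oct_norm v) (oct_norm w)"
    using orbit_iff[OF char] by blast
  show "\<forall>t::'k. t \<noteq> 0 \<longrightarrow> (\<exists>v \<in> oct_Vss. sq_class_eq (oct_norm v) t)"
    using v0_Vss sq_refl by metis
  define F :: "'k oct set \<Rightarrow> (('k \<times> 'k \<Rightarrow> 'k \<times> 'k \<Rightarrow> 'k \<times> 'k) \<times> ('k \<times> 'k \<Rightarrow> 'k)) set" where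
    "F X = comp_alg2_iso `` {(Fm (oct_norm (SOME w. w \<in> X)), FN (oct_norm (SOME w. w \<in> X)))}" for X
  have FX: "F (oct_orbit_rel `` {v}) = comp_alg2_iso `` {(Fm (oct_norm v), FN (oct_norm v))}"
    if "v \<in> oct_Vss" for v
    unfolding F_def using class_eq_FA[OF char that] .
  have E1: "equiv (oct_Vss :: 'k oct set) oct_orbit_rel" by (rule orbit_equiv[OF char])
  have E2: "equiv (comp_alg2 :: (('k \<times> 'k \<Rightarrow> 'k \<times> 'k \<Rightarrow> 'k \<times> 'k) \<times> ('k \<times> 'k \<Rightarrow> 'k)) set) comp_alg2_iso"
    by (rule iso_equiv)
  have FA: "(Fm (oct_norm v), FN (oct_norm v)) \<in> comp_alg2" if "v \<in> oct_Vss" for v :: "'k oct"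
    using FA_in[OF char] that by (auto simp: oct_Vss_def)
  have "bij_betw F ((oct_Vss :: 'k oct set) // oct_orbit_rel) (comp_alg2 // comp_alg2_iso)"
  proof (rule bij_betw_imageI)
    show "inj_on F (oct_Vss // oct_orbit_rel)"
    proof (rule inj_onI)
      fix X Y assume X: "X \<in> oct_Vss // oct_orbit_rel" and Y: "Y \<in> oct_Vss // oct_orbit_rel" and FXY: "F X = F Y"
      obtain v where v: "v \<in> oct_Vss" "X = oct_orbit_rel `` {v}" using X by (auto elim: quotientE)
      obtain w where w: "w \<in> oct_Vss" "Y = oct_orbit_rel `` {w}" using Y by (auto elim: quotientE)
      have "comp_alg2_iso `` {(Fm (oct_norm v), FN (oct_norm v))} = comp_alg2_iso `` {(Fm (oct_norm w), FN (oct_norm w))}"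
        using FXY FX v w by simp
      then have "((Fm (oct_norm v), FN (oct_norm v)), (Fm (oct_norm w), FN (oct_norm w))) \<in> comp_alg2_iso"
        using eq_equiv_class_iff[OF E2 FA[OF v(1)] FA[OF w(1)]] by simp
      then have "sq_class_eq (oct_norm v) (oct_norm w)"
        using FA_iso_sq[OF char] v(1) w(1) by (auto simp: oct_Vss_def)
      then have "(v, w) \<in> oct_orbit_rel" using orbit_iff[OF char v(1) w(1)] by simp
      then show "X = Y" using v w equiv_class_eq[OF E1] by simp
    qed
    show "F ` (oct_Vss // oct_orbit_rel) = comp_alg2 // comp_alg2_iso"
    proof
      show "F ` (oct_Vss // oct_orbit_rel) \<subseteq> comp_alg2 // comp_alg2_iso"
      proof
        fix Z assume "Z \<in> F ` (oct_Vss // oct_orbit_rel)"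
        then obtain v where v: "v \<in> oct_Vss" "Z = F (oct_orbit_rel `` {v})" by (auto elim: quotientE)
        then show "Z \<in> comp_alg2 // comp_alg2_iso" using FX[OF v(1)] FA[OF v(1)] by (simp add: quotientI)
      qed
      show "comp_alg2 // comp_alg2_iso \<subseteq> F ` (oct_Vss // oct_orbit_rel)"
      proof
        fix Z :: "(('k \<times> 'k \<Rightarrow> 'k \<times> 'k \<Rightarrow> 'k \<times> 'k) \<times> ('k \<times> 'k \<Rightarrow> 'k)) set"
        assume "Z \<in> comp_alg2 // comp_alg2_iso"
        then obtain A where A: "A \<in> comp_alg2" "Z = comp_alg2_iso `` {A}" by (auto elim: quotientE)
        obtain m N where mN: "A = (m, N)" by (cases A)
        have mNc: "(m, N) \<in> comp_alg2" using A(1) mN by simp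
        obtain t where t: "t \<noteq> 0" "((Fm t, FN t), (m, N)) \<in> comp_alg2_iso"
          using classify[OF mNc char] by blast
        have v: "v0 t \<in> oct_Vss" "oct_norm (v0 t) = t" using v0_Vss[OF t(1)] by auto
        have "F (oct_orbit_rel `` {v0 t}) = comp_alg2_iso `` {(Fm t, FN t)}" using FX[OF v(1)] v(2) by simp
        also have "\<dots> = Z" using equiv_class_eq[OF E2 t(2)] A(2) mN by simp
        finally show "Z \<in> F ` (oct_Vss // oct_orbit_rel)" using v(1) by (metis imageI quotientI)
      qed
    qed
  qed
  then show "\<exists>f. bij_betw f ((oct_Vss :: 'k oct set) // oct_orbit_rel)
                         ((comp_alg2 :: ((_ \<Rightarrow> _ \<Rightarrow> 'k \<times> 'k) \<times> _) set) // comp_alg2_iso)" by blast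
qed

end
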